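(* Let $G$ be a graph containing a subgraph $F$ isomorphic to $F_4$, with vertices labelled $u_0,u_1,u_2,u_3$ as described in the context and $U=\{u_1,u_2,u_3\}$, and let $T$ be a triangle of $G$ vertex-disjoint from $F$. If $d(u_{3},T)\geq 2$, or if $e(U,V(T))\geq 6$ and $d(u_{3},T)>0$, then $G[V(T)\cup V(F)]$ contains a triangle and a quadrilateral that are vertex-disjoint.
   Context: All graphs are finite, simple and undirected. $F_4$ denotes the graph with $4$ vertices and $4$ edges not containing a $4$-cycle, i.e. a claw (star $K_{1,3}$) with one additional edge joining two of its leaves (a triangle with a pendant edge). In a copy of $F_4$, $u_0$ denotes its unique vertex of degree $3$ in $F_4$, $u_1,u_2$ its two vertices of degree $2$ in $F_4$, and $u_3$ its unique vertex of degree $1$ in $F_4$ (so $F_4$ has edges $u_0u_1,u_0u_2,u_1u_2,u_0u_3$). For a vertex $v$ and subgraph $H$, $d(v,H)$ is the number of neighbours of $v$ in $G$ lying in $V(H)$; for disjoint vertex sets $L,M$, $e(L,M)$ is the number of edges of $G$ between $L$ and $M$. $G[W]$ is the subgraph induced by $W$. *)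

theory Defs
  imports Main
begin

definition simple_graph :: "'a set \<Rightarrow> ('a \<Rightarrow> 'a \<Rightarrow> bool) \<Rightarrow> bool" where
  "simple_graph V E \<longleftrightarrow> finite V \<and> (\<forall>x y. E x y \<longrightarrow> E y x) \<and> (\<forall>x. \<not> E x x)
     \<and> (\<forall>x y. E x y \<longrightarrow> x \<in> V \<and> y \<in> V)"

definition deg_in :: "('a \<Rightarrow> 'a \<Rightarrow> bool) \<Rightarrow> 'a \<Rightarrow> 'a set \<Rightarrow> nat" where
  "deg_in E v S = card {w \<in> S. E v w}"

definition edges_between :: "('a \<Rightarrow> 'a \<Rightarrow> bool) \<Rightarrow> 'a set \<Rightarrow> 'a set \<Rightarrow> nat" where
  "edges_between E L M = card {(x, y). x \<in> L \<and> y \<in> M \<and> E x y}"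

definition triangle_in :: "('a \<Rightarrow> 'a \<Rightarrow> bool) \<Rightarrow> 'a set \<Rightarrow> 'a \<Rightarrow> 'a \<Rightarrow> 'a \<Rightarrow> bool" where
  "triangle_in E W a b c \<longleftrightarrow> a \<in> W \<and> b \<in> W \<and> c \<in> W \<and>
     a \<noteq> b \<and> a \<noteq> c \<and> b \<noteq> c \<and> E a b \<and> E b c \<and> E a c"

definition quad_in :: "('a \<Rightarrow> 'a \<Rightarrow> bool) \<Rightarrow> 'a set \<Rightarrow> 'a \<Rightarrow> 'a \<Rightarrow> 'a \<Rightarrow> 'a \<Rightarrow> bool" where
  "quad_in E W a b c d \<longleftrightarrow> a \<in> W \<and> b \<in> W \<and> c \<in> W \<and> d \<in> W \<and>
     distinct [a, b, c, d] \<and> E a b \<and> E b c \<and> E c d \<and> E d a"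

end

theory Submission imports Defs begin
lemma card3_union_le: "card (X \<union> Y \<union> (Z::'a set)) \<le> card X + card Y + card Z"
    by (rule order_trans[OF card_Un_le add_mono[OF card_Un_le order_refl]])
lemma card3_le:
  "card {w \<in> {a, b, c}. P w} \<le> of_bool (P a) + of_bool (P b) + of_bool (P c)"
proof -
  have e: "{w \<in> {a, b, c}. P w} = (if P a then {a} else {}) \<union> (if P b then {b} else {}) \<union> (if P c then {c} else {})"
    by auto
  have c: "card (if P a then {a} else {}) + card (if P b then {b} else {}) + card (if P c then {c} else {}) = of_bool (P a) + of_bool (P b) + of_bool (P c)" by simp
  show ?thesis unfolding e c[symmetric] by (rule card3_union_le)
qed

lemma edges3_le:
  "edges_between E {x1, x2, x3} T \<le> deg_in E x1 T + deg_in E x2 T + deg_in E x3 T" if "finite T"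
proof -
  have e: "{(x, y). x \<in> {x1, x2, x3} \<and> y \<in> T \<and> E x y} =
        Pair x1 ` {w \<in> T. E x1 w} \<union> Pair x2 ` {w \<in> T. E x2 w} \<union> Pair x3 ` {w \<in> T. E x3 w}"
    by auto
  have "card (Pair x1 ` {w \<in> T. E x1 w}) + card (Pair x2 ` {w \<in> T. E x2 w}) + card (Pair x3 ` {w \<in> T. E x3 w}) \<le> deg_in E x1 T + deg_in E x2 T + deg_in E x3 T"
    unfolding deg_in_def by (intro add_mono card_image_le; simp add: that)
  then show ?thesis unfolding edges_between_def e using card3_union_le order_trans by blast
qed
lemma helperA:
  assumes sym: "\<forall>x y. E x y \<longrightarrow> E y x"
    and d: "distinct [u0, u1, u2, u3, t1, t2, t3]"
    and e: "E u0 u1" "E u0 u2" "E u1 u2" "E u0 u3" "E t1 t2" "E t2 t3" "E t1 t3"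
    and h: "E u3 t1" "E u3 t2"
    and W: "{t1,t2,t3,u0,u1,u2,u3} \<subseteq> W"
  shows "\<exists>a b c p q r s. triangle_in E W a b c \<and> quad_in E W p q r s \<and> {a, b, c} \<inter> {p, q, r, s} = {}"
  apply (rule exI[of _ u0], rule exI[of _ u1], rule exI[of _ u2])
  apply (rule exI[of _ u3], rule exI[of _ t1], rule exI[of _ t3], rule exI[of _ t2])
  using d e h W sym[rule_format, OF e(6)] sym[rule_format, OF h(2)]
  unfolding triangle_in_def quad_in_def by auto

lemma helperB:
  assumes sym: "\<forall>x y. E x y \<longrightarrow> E y x"
    and d: "distinct [u0, u1, u2, u3, t1, t2, t3]"
    and e: "E u0 u1" "E u0 u2" "E u1 u2" "E u0 u3" "E t1 t2" "E t2 t3" "E t1 t3"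
    and h: "E u3 t1" "E u1 t1" "E u1 t2" "E u1 t3" "E u2 t1 \<or> (E u2 t2 \<and> E u2 t3)"
    and W: "{t1,t2,t3,u0,u1,u2,u3} \<subseteq> W"
  shows "\<exists>a b c p q r s. triangle_in E W a b c \<and> quad_in E W p q r s \<and> {a, b, c} \<inter> {p, q, r, s} = {}"
proof (cases "E u2 t1")
  case True
  show ?thesis
  apply (rule exI[of _ u1], rule exI[of _ t2], rule exI[of _ t3])
  apply (rule exI[of _ u0], rule exI[of _ u3], rule exI[of _ t1], rule exI[of _ u2])
  using d e h W True sym[rule_format, OF True] sym[rule_format, OF e(2)]
  unfolding triangle_in_def quad_in_def by auto
next
  case False
  show ?thesis
  apply (rule exI[of _ u2], rule exI[of _ t2], rule exI[of _ t3])
  apply (rule exI[of _ u0], rule exI[of _ u3], rule exI[of _ t1], rule exI[of _ u1])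
  using d e h W False sym[rule_format, OF h(2)] sym[rule_format, OF e(1)]
  unfolding triangle_in_def quad_in_def by auto
qed

theorem lemma8:
  fixes V :: "'a set" and E :: "'a \<Rightarrow> 'a \<Rightarrow> bool"
    and u0 u1 u2 u3 t1 t2 t3 :: 'a
  assumes G: "simple_graph V E"
    and F_verts: "u0 \<in> V" "u1 \<in> V" "u2 \<in> V" "u3 \<in> V" "distinct [u0, u1, u2, u3]"
    and F_edges: "E u0 u1" "E u0 u2" "E u1 u2" "E u0 u3"
    and T: "triangle_in E V t1 t2 t3"
    and disj: "{t1, t2, t3} \<inter> {u0, u1, u2, u3} = {}"
    and hyp: "deg_in E u3 {t1, t2, t3} \<ge> 2 \<or>
              (edges_between E {u1, u2, u3} {t1, t2, t3} \<ge> 6 \<and> deg_in E u3 {t1, t2, t3} > 0)"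
  shows "\<exists>a b c p q r s. triangle_in E ({t1, t2, t3} \<union> {u0, u1, u2, u3}) a b c
           \<and> quad_in E ({t1, t2, t3} \<union> {u0, u1, u2, u3}) p q r s
           \<and> {a, b, c} \<inter> {p, q, r, s} = {}"
proof -
  let ?W = "{t1, t2, t3} \<union> {u0, u1, u2, u3}"
  have sym: "\<forall>x y. E x y \<longrightarrow> E y x" using G unfolding simple_graph_def by blast
  have te: "E t1 t2" "E t2 t3" "E t1 t3" and td: "t1 \<noteq> t2" "t1 \<noteq> t3" "t2 \<noteq> t3"
    using T unfolding triangle_in_def by auto
  have W: "\<And>a b c d e f g. {a,b,c,d,e,f,g} = {t1,t2,t3,u0,u1,u2,u3} \<Longrightarrow> {a,b,c,d,e,f,g} \<subseteq> ?W"
    by auto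
  have dg': "deg_in E u3 {t1,t2,t3} \<le> of_bool (E u3 t1) + of_bool (E u3 t2) + of_bool (E u3 t3)"
    "deg_in E u1 {t1,t2,t3} \<le> of_bool (E u1 t1) + of_bool (E u1 t2) + of_bool (E u1 t3)"
    "deg_in E u2 {t1,t2,t3} \<le> of_bool (E u2 t1) + of_bool (E u2 t2) + of_bool (E u2 t3)"
    unfolding deg_in_def by (rule card3_le)+
  have eb: "edges_between E {u1, u2, u3} {t1, t2, t3} \<le> deg_in E u1 {t1,t2,t3} + deg_in E u2 {t1,t2,t3} + deg_in E u3 {t1,t2,t3}"
    by (rule edges3_le) simp
  have d7: "distinct [u0, u1, u2, u3, t1, t2, t3]" using F_verts(5) disj td by auto
  have sE: "E x y \<Longrightarrow> E y x" for x y using sym by blast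
  consider (A1) "E u3 t1" "E u3 t2" | (A2) "E u3 t1" "E u3 t3" | (A3) "E u3 t2" "E u3 t3"
    | (B) "of_bool (E u3 t1) + of_bool (E u3 t2) + of_bool (E u3 t3) = (1::nat)"
      "of_bool (E u1 t1) + of_bool (E u1 t2) + of_bool (E u1 t3)
       + of_bool (E u2 t1) + of_bool (E u2 t2) + of_bool (E u2 t3) \<ge> (5::nat)"
    using hyp dg' eb by (cases "E u3 t1"; cases "E u3 t2"; cases "E u3 t3"; simp)
  then show ?thesis
  proof cases
    case A1 then show ?thesis
      using helperA[OF sym, of u0 u1 u2 u3 t1 t2 t3 ?W] d7 F_edges te by auto
  next
    case A2 then show ?thesis
      using helperA[OF sym, of u0 u1 u2 u3 t1 t3 t2 ?W] d7 F_edges te sE by auto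
  next
    case A3 then show ?thesis
      using helperA[OF sym, of u0 u1 u2 u3 t2 t3 t1 ?W] d7 F_edges te sE by auto
  next
    case B
    have 5: "(E u1 t1 \<and> E u1 t2 \<and> E u1 t3 \<and> (E u2 t1 \<and> E u2 t2 \<or> E u2 t1 \<and> E u2 t3 \<or> E u2 t2 \<and> E u2 t3))
      \<or> (E u2 t1 \<and> E u2 t2 \<and> E u2 t3 \<and> (E u1 t1 \<and> E u1 t2 \<or> E u1 t1 \<and> E u1 t3 \<or> E u1 t2 \<and> E u1 t3))"
      using B(2) by (cases "E u1 t1"; cases "E u1 t2"; cases "E u1 t3"; cases "E u2 t1"; cases "E u2 t2"; cases "E u2 t3"; simp)
    have 1: "E u3 t1 \<or> E u3 t2 \<or> E u3 t3" using B(1) by (cases "E u3 t1"; cases "E u3 t2"; cases "E u3 t3"; simp)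
    have I1: "E u3 t1 \<Longrightarrow> E u1 t1 \<Longrightarrow> E u1 t2 \<Longrightarrow> E u1 t3 \<Longrightarrow> E u2 t1 \<or> (E u2 t2 \<and> E u2 t3) \<Longrightarrow> ?thesis"
      by (rule helperB[OF sym, of u0 u1 u2 u3 t1 t2 t3 ?W]) (use d7 F_edges te sE in auto)
    have I2: "E u3 t1 \<Longrightarrow> E u2 t1 \<Longrightarrow> E u2 t2 \<Longrightarrow> E u2 t3 \<Longrightarrow> E u1 t1 \<or> (E u1 t2 \<and> E u1 t3) \<Longrightarrow> ?thesis"
      by (rule helperB[OF sym, of u0 u2 u1 u3 t1 t2 t3 ?W]) (use d7 F_edges te sE in auto)
    have I3: "E u3 t2 \<Longrightarrow> E u1 t2 \<Longrightarrow> E u1 t1 \<Longrightarrow> E u1 t3 \<Longrightarrow> E u2 t2 \<or> (E u2 t1 \<and> E u2 t3) \<Longrightarrow> ?thesis"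
      by (rule helperB[OF sym, of u0 u1 u2 u3 t2 t1 t3 ?W]) (use d7 F_edges te sE in auto)
    have I4: "E u3 t2 \<Longrightarrow> E u2 t2 \<Longrightarrow> E u2 t1 \<Longrightarrow> E u2 t3 \<Longrightarrow> E u1 t2 \<or> (E u1 t1 \<and> E u1 t3) \<Longrightarrow> ?thesis"
      by (rule helperB[OF sym, of u0 u2 u1 u3 t2 t1 t3 ?W]) (use d7 F_edges te sE in auto)
    have I5: "E u3 t3 \<Longrightarrow> E u1 t3 \<Longrightarrow> E u1 t1 \<Longrightarrow> E u1 t2 \<Longrightarrow> E u2 t3 \<or> (E u2 t1 \<and> E u2 t2) \<Longrightarrow> ?thesis"
      by (rule helperB[OF sym, of u0 u1 u2 u3 t3 t1 t2 ?W]) (use d7 F_edges te sE in auto)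
    have I6: "E u3 t3 \<Longrightarrow> E u2 t3 \<Longrightarrow> E u2 t1 \<Longrightarrow> E u2 t2 \<Longrightarrow> E u1 t3 \<or> (E u1 t1 \<and> E u1 t2) \<Longrightarrow> ?thesis"
      by (rule helperB[OF sym, of u0 u2 u1 u3 t3 t1 t2 ?W]) (use d7 F_edges te sE in auto)
    show ?thesis using 5 1 I1 I2 I3 I4 I5 I6 by blast
  qed
qed

end
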